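(* Let $\Gamma$ be a metrized graph that is a tree with $v$ vertices. For any $p \in V(\Gamma)$, $$\ell(\Gamma) = \sum_{q \in V(\Gamma)}\big(2-\mathrm{val}(q)\big)\,r(p,q).$$ In particular, if each edge length is equal to $1$, $$v-1 = \sum_{q \in V(\Gamma)}\big(2-\mathrm{val}(q)\big)\,r(p,q).$$
   Context: A metrized graph is a finite connected graph each of whose edges is identified with a closed segment of positive length; its vertex set $V(\Gamma)$ is a finite nonempty set containing every point of valence $\neq 2$, and $v=\#V(\Gamma)$. $\mathrm{val}(q)$ is the valence of $q$ (number of directions emanating from $q$). $\ell(\Gamma)$ is the total length. $r(p,q)$ is the effective resistance between $p$ and $q$ (edges as resistors of resistance equal to length), which on a tree equals the path distance. *)

theory Defs
  imports Complex_Main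
begin

text \<open>A metrized graph with vertex set V, edges E (here 2-element subsets of V; a tree
has neither loops nor multiple edges) and edge lengths L.\<close>

definition metrized_graph :: "'a set \<Rightarrow> 'a set set \<Rightarrow> ('a set \<Rightarrow> real) \<Rightarrow> bool" where
  "metrized_graph V E L \<longleftrightarrow> finite V \<and> V \<noteq> {} \<and>
     (\<forall>e\<in>E. \<exists>u v. e = {u, v} \<and> u \<noteq> v \<and> u \<in> V \<and> v \<in> V) \<and>
     (\<forall>e\<in>E. L e > 0)"

definition adj :: "'a set set \<Rightarrow> 'a \<Rightarrow> 'a \<Rightarrow> bool" where
  "adj E u v \<longleftrightarrow> u \<noteq> v \<and> {u, v} \<in> E"

definition connected_graph :: "'a set \<Rightarrow> 'a set set \<Rightarrow> bool" where
  "connected_graph V E \<longleftrightarrow>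
     (\<forall>u\<in>V. \<forall>v\<in>V. (u, v) \<in> {(x, y). adj E x y}\<^sup>*)"

definition is_cycle :: "'a set set \<Rightarrow> 'a list \<Rightarrow> bool" where
  "is_cycle E cs \<longleftrightarrow> length cs \<ge> 3 \<and> distinct cs \<and>
     (\<forall>i < length cs - 1. adj E (cs ! i) (cs ! Suc i)) \<and> adj E (last cs) (hd cs)"

definition is_tree :: "'a set \<Rightarrow> 'a set set \<Rightarrow> bool" where
  "is_tree V E \<longleftrightarrow> connected_graph V E \<and> \<not> (\<exists>cs. is_cycle E cs)"

definition valence :: "'a set set \<Rightarrow> 'a \<Rightarrow> nat" where
  "valence E q = card {e \<in> E. q \<in> e}"

definition total_length :: "'a set set \<Rightarrow> ('a set \<Rightarrow> real) \<Rightarrow> real" where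
  "total_length E L = (\<Sum>e\<in>E. L e)"

definition energy :: "'a set \<Rightarrow> 'a set set \<Rightarrow> ('a set \<Rightarrow> real) \<Rightarrow> ('a \<Rightarrow> real) \<Rightarrow> real" where
  "energy V E L f = (\<Sum>(u, v) \<in> {(u, v). u \<in> V \<and> v \<in> V \<and> adj E u v}.
                       (f u - f v)^2 / L {u, v}) / 2"

text \<open>Effective resistance (edges as resistors of resistance equal to their length),
via Dirichlet's principle: 1/r(p,q) = min energy of a potential with f p = 0, f q = 1.\<close>
definition eff_resistance :: "'a set \<Rightarrow> 'a set set \<Rightarrow> ('a set \<Rightarrow> real) \<Rightarrow> 'a \<Rightarrow> 'a \<Rightarrow> real" where
  "eff_resistance V E L p q =
     (if p = q then 0
      else 1 / (INF f \<in> {f. f p = 0 \<and> f q = 1}. energy V E L f))"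

end

theory Submission
  imports Defs
begin

lemma adj_sym: "adj E u v \<Longrightarrow> adj E v u"
  by (auto simp: adj_def insert_commute)

lemma adj_in_V: "metrized_graph V E L \<Longrightarrow> adj E u v \<Longrightarrow> u \<in> V \<and> v \<in> V"
  unfolding metrized_graph_def adj_def by (metis insertCI insert_iff singletonD doubleton_eq_iff)

lemma edge_form: "metrized_graph V E L \<Longrightarrow> e \<in> E \<Longrightarrow> \<exists>u v. e = {u, v} \<and> adj E u v"
proof -
  assume m: "metrized_graph V E L" and e: "e \<in> E"
  then obtain u v where "e = {u, v}" "u \<noteq> v" unfolding metrized_graph_def by meson
  then show ?thesis using e unfolding adj_def by blast
qed

lemma finite_E: "metrized_graph V E L \<Longrightarrow> finite E"
proof -
  assume m: "metrized_graph V E L"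
  have "E \<subseteq> Pow V"
  proof
    fix e assume "e \<in> E"
    then obtain u v where "e = {u, v}" "u \<in> V" "v \<in> V" using m unfolding metrized_graph_def by meson
    then show "e \<in> Pow V" by simp
  qed
  moreover have "finite V" using m unfolding metrized_graph_def by blast
  ultimately show ?thesis by (meson finite_Pow_iff finite_subset)
qed

lemma leaf_exists:
  assumes m: "metrized_graph V E L" and t: "is_tree V E" and pV: "p \<in> V" and c: "card V \<ge> 2"
  shows "\<exists>x y. x \<in> V \<and> x \<noteq> p \<and> y \<in> V \<and> adj E x y \<and> (\<forall>z. adj E x z \<longrightarrow> z = y)"
proof -
  have fV: "finite V" using m unfolding metrized_graph_def by blast
  define P where "P ps \<longleftrightarrow> ps \<noteq> [] \<and> hd ps = p \<and> distinct ps \<and> set ps \<subseteq> V \<and>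
     (\<forall>i. Suc i < length ps \<longrightarrow> adj E (ps!i) (ps!Suc i))" for ps
  obtain w where w: "w \<in> V" "w \<noteq> p"
  proof -
    have "\<not> V \<subseteq> {p}" using c card_mono[of "{p}" V] by auto
    then show ?thesis using that by blast
  qed
  have "(p, w) \<in> {(x, y). adj E x y}\<^sup>*" using t pV w unfolding is_tree_def connected_graph_def by blast
  then obtain z where z: "adj E p z"
    using w(2) by (induct rule: converse_rtrancl_induct) auto
  have Pz: "P [p, z]" unfolding P_def using z adj_in_V[OF m z] by (auto simp: adj_def)
  have bound: "\<forall>qs. P qs \<longrightarrow> length qs < card V + 1"
  proof (intro allI impI)
    fix qs assume "P qs"
    then have "distinct qs" "set qs \<subseteq> V" unfolding P_def by auto
    then have "length qs \<le> card V" by (metis card_mono distinct_card fV)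
    then show "length qs < card V + 1" by simp
  qed
  obtain ps where Pps: "P ps" and mx: "\<forall>qs. P qs \<longrightarrow> length qs \<le> length ps"
    using ex_has_greatest_nat[of P "[p,z]" length "card V + 1", OF Pz bound] by blast
  define n where "n = length ps"
  have n2: "n \<ge> 2" using mx Pz unfolding n_def by fastforce
  have ne: "ps \<noteq> []" and hd: "hd ps = p" and dist: "distinct ps" and sV: "set ps \<subseteq> V"
    and ad: "\<And>i. Suc i < n \<Longrightarrow> adj E (ps!i) (ps!Suc i)" using Pps unfolding P_def n_def by auto
  define x where "x = ps ! (n - 1)"
  define y where "y = ps ! (n - 2)"
  have lastx: "last ps = x" unfolding x_def n_def using ne by (simp add: last_conv_nth)
  have p0: "ps ! 0 = p" using hd ne by (simp add: hd_conv_nth)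
  have xV: "x \<in> V" using sV n2 unfolding x_def n_def by (auto intro!: nth_mem[THEN subsetD[OF sV]])
  have yV: "y \<in> V" using sV n2 unfolding y_def n_def by (auto intro!: nth_mem[THEN subsetD[OF sV]])
  have xp: "x \<noteq> p" unfolding x_def using p0 n2 ne n_def
    nth_eq_iff_index_eq[OF dist, of "n - 1" 0] by simp
  have nn: "Suc (n-2) = n - 1" "Suc (n-2) < n" using n2 by auto
  have yx: "adj E y x" using ad[OF nn(2)] unfolding x_def y_def nn(1) .
  have uniq: "\<forall>z. adj E x z \<longrightarrow> z = y"
  proof (intro allI impI)
    fix z assume xz: "adj E x z"
    have zin: "z \<in> set ps"
    proof (rule ccontr)
      assume zn: "z \<notin> set ps"
      have "P (ps @ [z])" unfolding P_def
      proof (intro conjI allI impI)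
        show "ps @ [z] \<noteq> []" by simp
        show "hd (ps @ [z]) = p" using hd ne by simp
        show "distinct (ps @ [z])" using dist zn by simp
        show "set (ps @ [z]) \<subseteq> V" using sV adj_in_V[OF m xz] by simp
        fix i assume i: "Suc i < length (ps @ [z])"
        show "adj E ((ps @ [z]) ! i) ((ps @ [z]) ! Suc i)"
        proof (cases "Suc i < n")
          case True then show ?thesis using ad[OF True] by (simp add: nth_append n_def)
        next
          case False
          then have si: "Suc i = n" using i n_def by simp
          then have "i = n - 1" by simp
          then show ?thesis using xz si unfolding x_def by (simp add: nth_append n_def)
        qed
      qed
      then show False using mx unfolding n_def by fastforce
    qed
    then obtain i where i: "i < n" "ps ! i = z" unfolding n_def by (metis in_set_conv_nth)
    have "i \<noteq> n - 1" using xz i unfolding x_def adj_def by auto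
    moreover have "\<not> i < n - 2"
    proof
      assume il: "i < n - 2"
      define cs where "cs = drop i ps"
      have "is_cycle E cs" unfolding is_cycle_def
      proof (intro conjI allI impI)
        show "3 \<le> length cs" using il unfolding cs_def n_def by simp
        show "distinct cs" using dist unfolding cs_def by simp
        fix j assume "j < length cs - 1"
        then have "Suc (i + j) < n" unfolding cs_def n_def by simp
        then show "adj E (cs ! j) (cs ! Suc j)" using ad unfolding cs_def n_def by simp
      next
        have "last cs = x" unfolding cs_def using lastx il n_def by (simp add: last_drop)
        moreover have "hd cs = z" unfolding cs_def using i il n_def by (simp add: hd_drop_conv_nth)
        ultimately show "adj E (last cs) (hd cs)" using xz by simp
      qed
      then show False using t unfolding is_tree_def by blast
    qed
    ultimately have "i = n - 2" using i by linarith
    then show "z = y" using i unfolding y_def by simp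
  qed
  show ?thesis using xV xp yV adj_sym[OF yx] uniq by blast
qed


lemma energy_nonneg:
  assumes m: "metrized_graph V E L" shows "0 \<le> energy V E L f"
proof -
  have "0 \<le> (\<Sum>(u, v) \<in> {(u, v). u \<in> V \<and> v \<in> V \<and> adj E u v}. (f u - f v)^2 / L {u, v})"
  proof (rule sum_nonneg)
    fix uv assume "uv \<in> {(u, v). u \<in> V \<and> v \<in> V \<and> adj E u v}"
    then obtain u v where "uv = (u,v)" "{u,v} \<in> E" unfolding adj_def by auto
    then show "0 \<le> (case uv of (u, v) \<Rightarrow> (f u - f v)^2 / L {u, v})"
      using m unfolding metrized_graph_def by (auto intro!: divide_nonneg_pos)
  qed
  then show ?thesis unfolding energy_def by simp
qed

lemma energy_scale: "energy V E L (\<lambda>v. c * f v) = c^2 * energy V E L f"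
proof -
  have "(\<Sum>(u, v) \<in> {(u, v). u \<in> V \<and> v \<in> V \<and> adj E u v}. (c * f u - c * f v)^2 / L {u, v})
     = c^2 * (\<Sum>(u, v) \<in> {(u, v). u \<in> V \<and> v \<in> V \<and> adj E u v}. (f u - f v)^2 / L {u, v})"
    unfolding sum_distrib_left
  proof (rule sum.cong)
    fix uv show "(case uv of (u, v) \<Rightarrow> (c * f u - c * f v)^2 / L {u, v}) =
      c^2 * (case uv of (u, v) \<Rightarrow> (f u - f v)^2 / L {u, v})"
      by (cases uv) (simp add: right_diff_distrib[symmetric] power_mult_distrib)
  qed simp
  then show ?thesis unfolding energy_def by simp
qed

lemma energy_local: "x \<notin> V \<Longrightarrow> energy V E L (f(x := c)) = energy V E L f"
  unfolding energy_def by (auto intro!: sum.cong)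

lemma energy_remove_leaf:
  assumes m: "metrized_graph V E L" and xV: "x \<in> V" and yV: "y \<in> V" and xy: "adj E x y"
    and uq: "\<forall>z. adj E x z \<longrightarrow> z = y"
  shows "energy V E L f = energy (V - {x}) (E - {{x,y}}) L f + (f x - f y)^2 / L {x,y}"
proof -
  define S where "S = {(u, v). u \<in> V \<and> v \<in> V \<and> adj E u v}"
  define S' where "S' = {(u, v). u \<in> V - {x} \<and> v \<in> V - {x} \<and> adj (E - {{x,y}}) u v}"
  define F where "F = (\<lambda>(u,v). (f u - f v)^2 / L {u, v})"
  have xny: "x \<noteq> y" using xy unfolding adj_def by auto
  have Sdec: "S = S' \<union> {(x,y),(y,x)}"
  proof (rule set_eqI, rule iffI)
    fix uv assume "uv \<in> S"
    then obtain u v where uv: "uv = (u,v)" "u \<in> V" "v \<in> V" "adj E u v" unfolding S_def by auto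
    show "uv \<in> S' \<union> {(x,y),(y,x)}"
    proof (cases "u = x \<or> v = x")
      case True
      then show ?thesis
      proof
        assume "u = x" then have "v = y" using uq uv(4) by blast
        then show ?thesis using uv \<open>u = x\<close> by simp
      next
        assume "v = x" then have "u = y" using uq adj_sym[OF uv(4)] by blast
        then show ?thesis using uv \<open>v = x\<close> by simp
      qed
    next
      case False
      then have "{u,v} \<noteq> {x,y}" by auto
      then show ?thesis using uv False unfolding S'_def adj_def by auto
    qed
  next
    fix uv assume "uv \<in> S' \<union> {(x,y),(y,x)}"
    then show "uv \<in> S" unfolding S_def S'_def using xV yV xy adj_sym[OF xy]
      by (auto simp: adj_def)
  qed
  have fS': "finite S'"
  proof -
    have "S' \<subseteq> V \<times> V" unfolding S'_def by auto
    moreover have "finite V" using m unfolding metrized_graph_def by blast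
    ultimately show ?thesis by (meson finite_SigmaI finite_subset)
  qed
  have disj: "S' \<inter> {(x,y),(y,x)} = {}" unfolding S'_def by auto
  have "sum F S = sum F S' + sum F {(x,y),(y,x)}"
    unfolding Sdec by (rule sum.union_disjoint[OF fS' _ disj]) simp
  also have "sum F {(x,y),(y,x)} = 2 * ((f x - f y)^2 / L {x,y})"
    using xny unfolding F_def by (simp add: insert_commute power2_commute)
  finally have "sum F S = sum F S' + 2 * ((f x - f y)^2 / L {x,y})" .
  then show ?thesis unfolding energy_def S_def[symmetric] S'_def[symmetric] F_def[symmetric]
    by simp
qed

definition good where
  "good V E L p q r \<longleftrightarrow> r > 0 \<and> (\<exists>g. g p = 0 \<and> g q = 1 \<and> energy V E L g = 1/r) \<and>
     (\<forall>f. f p = 0 \<longrightarrow> f q = 1 \<longrightarrow> 1/r \<le> energy V E L f)"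

lemma good_res: "good V E L p q r \<Longrightarrow> p \<noteq> q \<Longrightarrow> eff_resistance V E L p q = r"
proof -
  assume g: "good V E L p q r" and pq: "p \<noteq> q"
  then obtain g where gg: "g p = 0" "g q = 1" "energy V E L g = 1/r" unfolding good_def by blast
  have "(INF f \<in> {f. f p = 0 \<and> f q = 1}. energy V E L f) = 1/r"
    apply (rule cInf_eq_minimum)
    using gg g unfolding good_def by (auto intro!: image_eqI[where x=g])
  then show ?thesis using pq g unfolding eff_resistance_def good_def by simp
qed


lemma adj_remove:
  assumes a: "adj E w z" and w: "w \<noteq> x" and z: "z \<noteq> x" shows "adj (E - {{x,y}}) w z"
proof -
  have ne: "{w,z} \<noteq> {x,y}"
  proof
    assume "{w,z} = {x,y}" then have "x \<in> {w,z}" by simp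
    then show False using w z by simp
  qed
  show ?thesis using a ne unfolding adj_def by simp
qed

lemma mg_pos: "metrized_graph V E L \<Longrightarrow> e \<in> E \<Longrightarrow> L e > 0"
  unfolding metrized_graph_def by simp

lemma mg_fin: "metrized_graph V E L \<Longrightarrow> finite V"
  unfolding metrized_graph_def by simp

lemma adj_mono: "adj (E - F) a b \<Longrightarrow> adj E a b"
  unfolding adj_def by simp

lemma cycle_mono:
  assumes c: "is_cycle (E - F) cs" shows "is_cycle E cs"
proof -
  have "\<forall>i < length cs - 1. adj (E - F) (cs ! i) (cs ! Suc i)" "adj (E - F) (last cs) (hd cs)"
    "length cs \<ge> 3" "distinct cs" using c unfolding is_cycle_def by auto
  then show ?thesis unfolding is_cycle_def using adj_mono by metis
qed

lemma subtree:
  assumes m: "metrized_graph V E L" and t: "is_tree V E" and xV: "x \<in> V" and xy: "adj E x y"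
    and uq: "\<forall>z. adj E x z \<longrightarrow> z = y" and pV: "p \<in> V" and xp: "x \<noteq> p"
  shows "metrized_graph (V - {x}) (E - {{x,y}}) L" "is_tree (V - {x}) (E - {{x,y}})"
proof -
  have ex: "\<exists>u v. e = {u, v} \<and> u \<noteq> v \<and> u \<in> V - {x} \<and> v \<in> V - {x}" if e: "e \<in> E - {{x,y}}" for e
  proof -
    obtain u v where uv: "e = {u,v}" "adj E u v" using edge_form[OF m] e by blast
    have ux: "u \<noteq> x"
    proof
      assume "u = x" then have "v = y" using uq uv(2) by blast
      then show False using e uv \<open>u = x\<close> by simp
    qed
    have vx: "v \<noteq> x"
    proof
      assume "v = x" then have "u = y" using uq adj_sym[OF uv(2)] by blast
      then show False using e uv \<open>v = x\<close> by (simp add: insert_commute)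
    qed
    have "u \<in> V" "v \<in> V" using adj_in_V[OF m uv(2)] by auto
    moreover have "u \<noteq> v" using uv(2) unfolding adj_def by simp
    ultimately show ?thesis using ux vx uv(1) by blast
  qed
  show "metrized_graph (V - {x}) (E - {{x,y}}) L"
    unfolding metrized_graph_def
  proof (intro conjI ballI)
    show "finite (V - {x})" using mg_fin[OF m] by simp
    show "V - {x} \<noteq> {}" using pV xp by blast
  next
    fix e assume e: "e \<in> E - {{x,y}}"
    show "\<exists>u v. e = {u, v} \<and> u \<noteq> v \<and> u \<in> V - {x} \<and> v \<in> V - {x}" using ex[OF e] .
  next
    fix e assume e: "e \<in> E - {{x,y}}"
    then show "L e > 0" using mg_pos[OF m] by simp
  qed
  let ?R = "{(a, b). adj E a b}" and ?R' = "{(a, b). adj (E - {{x,y}}) a b}"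
  have claim: "(u, w) \<in> ?R\<^sup>* \<Longrightarrow> u \<noteq> x \<Longrightarrow>
      (w \<noteq> x \<longrightarrow> (u, w) \<in> ?R'\<^sup>*) \<and> (w = x \<longrightarrow> (u, y) \<in> ?R'\<^sup>*)" for u w
  proof (induction rule: rtrancl_induct)
    case base then show ?case by simp
  next
    case (step w z)
    then have wz: "adj E w z" by simp
    show ?case
    proof (cases "w = x")
      case True
      then have zy: "z = y" using uq wz by blast
      have "z \<noteq> x" using wz True unfolding adj_def by auto
      moreover have "(u, y) \<in> ?R'\<^sup>*" using step.IH step.prems True by simp
      ultimately show ?thesis using zy by simp
    next
      case False
      note wx = False
      have IH: "(u, w) \<in> ?R'\<^sup>*" using step.IH step.prems wx by simp
      show ?thesis
      proof (cases "z = x")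
        case True
        then have "w = y" using uq adj_sym[OF wz] by blast
        then show ?thesis using IH True by simp
      next
        case False
        then have "adj (E - {{x,y}}) w z" using adj_remove[OF wz wx] by blast
        then have "(u, z) \<in> ?R'\<^sup>*" using IH by (simp add: rtrancl_into_rtrancl)
        then show ?thesis using False by simp
      qed
    qed
  qed
  have conn: "connected_graph (V - {x}) (E - {{x,y}})"
    unfolding connected_graph_def
  proof (intro ballI)
    fix u v assume u: "u \<in> V - {x}" and v: "v \<in> V - {x}"
    then have "(u, v) \<in> ?R\<^sup>*" using t unfolding is_tree_def connected_graph_def by simp
    then show "(u, v) \<in> ?R'\<^sup>*" using claim u v by simp
  qed
  show "is_tree (V - {x}) (E - {{x,y}})" using conn t cycle_mono unfolding is_tree_def by blast
qed

lemma valence_remove: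
  assumes m: "metrized_graph V E L" and xy: "adj E x y" and qx: "q \<noteq> x"
  shows "real (valence E q) = real (valence (E - {{x,y}}) q) + (if q = y then 1 else 0)"
proof -
  have fE: "finite E" using finite_E[OF m] .
  have e0: "{x,y} \<in> E" using xy unfolding adj_def by simp
  show ?thesis
  proof (cases "q = y")
    case True
    have "{e \<in> E. q \<in> e} = insert {x,y} {e \<in> E - {{x,y}}. q \<in> e}" using True e0 by auto
    then have "card {e \<in> E. q \<in> e} = Suc (card {e \<in> E - {{x,y}}. q \<in> e})"
      using fE by simp
    then show ?thesis using True unfolding valence_def by simp
  next
    case False
    have "{e \<in> E. q \<in> e} = {e \<in> E - {{x,y}}. q \<in> e}" using False qx by auto
    then show ?thesis using False unfolding valence_def by simp
  qed
qed

lemma valence_leaf: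
  assumes m: "metrized_graph V E L" and xy: "adj E x y" and uq: "\<forall>z. adj E x z \<longrightarrow> z = y"
  shows "valence E x = 1"
proof -
  have "{e \<in> E. x \<in> e} = {{x,y}}"
  proof (rule set_eqI, rule iffI)
    fix e assume e: "e \<in> {e \<in> E. x \<in> e}"
    then obtain u v where uv: "e = {u,v}" "adj E u v" using edge_form[OF m] by blast
    have "u = x \<or> v = x" using e uv by auto
    then show "e \<in> {{x,y}}"
    proof
      assume "u = x" then have "v = y" using uq uv(2) by blast
      then show ?thesis using uv \<open>u = x\<close> by simp
    next
      assume "v = x" then have "u = y" using uq adj_sym[OF uv(2)] by blast
      then show ?thesis using uv \<open>v = x\<close> by (simp add: insert_commute)
    qed
  next
    fix e assume "e \<in> {{x,y}}" then show "e \<in> {e \<in> E. x \<in> e}" using xy unfolding adj_def by auto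
  qed
  then show ?thesis unfolding valence_def by simp
qed

lemma sq_ineq:
  fixes r a t :: real assumes r: "r > 0" and a: "a > 0"
  shows "1 / (r + a) \<le> t^2 / r + (1 - t)^2 / a"
proof -
  have "0 \<le> (t * a - (1 - t) * r)^2" by simp
  then have "r * a \<le> (r + a) * (t^2 * a + (1 - t)^2 * r)"
    by (simp add: power2_eq_square algebra_simps)
  define X where "X = t^2 * a + (1 - t)^2 * r"
  have ra: "r * a > 0" using r a by simp
  have "1 / (r + a) = (r * a) / ((r + a) * (r * a))" using r a by simp
  also have "\<dots> \<le> ((r + a) * X) / ((r + a) * (r * a))"
    using \<open>r * a \<le> _\<close> r a unfolding X_def by (intro divide_right_mono) auto
  also have "\<dots> = X / (r * a)" using r a by simp
  also have "\<dots> = t^2 / r + (1 - t)^2 / a" unfolding X_def using r a by (simp add: field_simps)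
  finally show ?thesis .
qed


lemma main:
  "card V = n \<Longrightarrow> metrized_graph V E L \<Longrightarrow> is_tree V E \<Longrightarrow> p \<in> V \<Longrightarrow>
   (\<forall>q\<in>V. q \<noteq> p \<longrightarrow> good V E L p q (eff_resistance V E L p q)) \<and>
   total_length E L = (\<Sum>q\<in>V. (2 - real (valence E q)) * eff_resistance V E L p q) \<and>
   card E + 1 = card V"
proof (induction n arbitrary: V E)
  case 0
  then show ?case unfolding metrized_graph_def by auto
next
  case (Suc n)
  note m = Suc.prems(2) and t = Suc.prems(3) and pV = Suc.prems(4)
  have fV: "finite V" using m unfolding metrized_graph_def by blast
  show ?case
  proof (cases "n = 0")
    case True
    then have "V = {p}" using Suc.prems(1) pV by (metis One_nat_def card_1_singleton_iff singletonD)
    moreover have "E = {}"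
    proof -
      { fix e assume "e \<in> E"
        then obtain u v where "e = {u,v}" "u \<noteq> v" "u \<in> V" "v \<in> V" using m unfolding metrized_graph_def by blast
        then have False using \<open>V = {p}\<close> by auto }
      then show ?thesis by blast
    qed
    ultimately show ?thesis unfolding total_length_def eff_resistance_def by simp
  next
    case False
    have "card V \<ge> 2" using False Suc.prems(1) by simp
    then obtain x y where xV: "x \<in> V" and xp: "x \<noteq> p" and yV: "y \<in> V" and xy: "adj E x y"
      and uq: "\<forall>z. adj E x z \<longrightarrow> z = y" using leaf_exists[OF m t pV] by blast
    define V' where "V' = V - {x}"
    define E' where "E' = E - {{x,y}}"
    have m': "metrized_graph V' E' L" and t': "is_tree V' E'"
      using subtree[OF m t xV xy uq pV xp] unfolding V'_def E'_def by auto
    have pV': "p \<in> V'" using pV xp unfolding V'_def by simp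
    have yx: "y \<noteq> x" using xy unfolding adj_def by auto
    have yV': "y \<in> V'" using yV yx unfolding V'_def by simp
    have cV': "card V' = n" using Suc.prems(1) xV fV unfolding V'_def by simp
    have IH: "(\<forall>q\<in>V'. q \<noteq> p \<longrightarrow> good V' E' L p q (eff_resistance V' E' L p q)) \<and>
      total_length E' L = (\<Sum>q\<in>V'. (2 - real (valence E' q)) * eff_resistance V' E' L p q) \<and>
      card E' + 1 = card V'" using Suc.IH[OF cV' m' t' pV'] .
    define r' where "r' = eff_resistance V' E' L p"
    define a where "a = L {x,y}"
    have e0: "{x,y} \<in> E" using xy unfolding adj_def by simp
    have a0: "a > 0" using e0 m unfolding a_def metrized_graph_def by blast
    have eT: "\<And>f. energy V E L f = energy V' E' L f + (f x - f y)^2 / a"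
      unfolding V'_def E'_def a_def using energy_remove_leaf[OF m xV yV xy uq] .
    have xV': "x \<notin> V'" unfolding V'_def by simp
    have A: "good V E L p q (r' q)" if q: "q \<in> V'" "q \<noteq> p" for q
    proof -
      have g': "good V' E' L p q (r' q)" using IH q unfolding r'_def by blast
      then obtain g where g: "g p = 0" "g q = 1" "energy V' E' L g = 1 / r' q" unfolding good_def by blast
      have qx: "q \<noteq> x" using q xV' by blast
      define h where "h = g(x := g y)"
      have "h p = 0" "h q = 1" using g xp qx unfolding h_def by auto
      moreover have "energy V E L h = 1 / r' q"
        unfolding eT using energy_local[OF xV'] g(3) yx unfolding h_def by simp
      moreover have "\<forall>f. f p = 0 \<longrightarrow> f q = 1 \<longrightarrow> 1 / r' q \<le> energy V E L f"
      proof (intro allI impI)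
        fix f :: "'a \<Rightarrow> real" assume "f p = 0" "f q = 1"
        then have "1 / r' q \<le> energy V' E' L f" using g' unfolding good_def by blast
        moreover have "0 \<le> (f x - f y)^2 / a" using a0 by simp
        ultimately show "1 / r' q \<le> energy V E L f" unfolding eT by linarith
      qed
      ultimately show ?thesis using g' unfolding good_def by blast
    qed
    have B: "good V E L p x (r' y + a)"
    proof (cases "y = p")
      case True
      have r0: "r' y = 0" unfolding r'_def eff_resistance_def using True by simp
      define h where "h = (\<lambda>v::'a. 0::real)(x := 1)"
      have "h p = 0" "h x = 1" using xp unfolding h_def by auto
      moreover have "energy V E L h = 1 / (r' y + a)"
      proof -
        have "energy V' E' L h = energy V' E' L (\<lambda>v. 0 * 0)"
          unfolding h_def using energy_local[OF xV'] by simp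
        also have "\<dots> = 0" using energy_scale[of V' E' L 0 "\<lambda>v. 0"] by simp
        finally show ?thesis unfolding eT using r0 True \<open>h p = 0\<close> \<open>h x = 1\<close> by simp
      qed
      moreover have "\<forall>f. f p = 0 \<longrightarrow> f x = 1 \<longrightarrow> 1 / (r' y + a) \<le> energy V E L f"
      proof (intro allI impI)
        fix f :: "'a \<Rightarrow> real" assume "f p = 0" "f x = 1"
        then show "1 / (r' y + a) \<le> energy V E L f" unfolding eT
          using energy_nonneg[OF m', of f] r0 True by simp
      qed
      ultimately show ?thesis unfolding good_def using r0 a0 by auto
    next
      case False
      define r where "r = r' y"
      have g': "good V' E' L p y r" using IH False yV' unfolding r_def r'_def by blast
      then have r0: "r > 0" unfolding good_def by simp
      obtain g where g: "g p = 0" "g y = 1" "energy V' E' L g = 1 / r" using g' unfolding good_def by blast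
      define s where "s = r / (r + a)"
      define h where "h = (\<lambda>v. s * g v)(x := 1)"
      have "h p = 0" "h x = 1" using xp g unfolding h_def by auto
      moreover have "energy V E L h = 1 / (r' y + a)"
      proof -
        have "energy V E L h = s^2 * (1 / r) + (1 - s)^2 / a"
          unfolding eT using energy_local[OF xV'] energy_scale[of V' E' L s g] g yx unfolding h_def by simp
        also have "\<dots> = 1 / (r + a)"
        proof -
          have ra: "r + a > 0" using r0 a0 by simp
          have s1: "s^2 * (1 / r) = r / (r + a)^2" using r0 ra unfolding s_def
            by (simp add: power2_eq_square field_simps)
          have "1 - s = a / (r + a)" using ra unfolding s_def by (simp add: field_simps)
          then have "(1 - s)^2 / a = (a / (r + a))^2 / a" by simp
          also have "\<dots> = a / (r + a)^2" using a0 ra by (simp add: power2_eq_square)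
          finally have s2: "(1 - s)^2 / a = a / (r + a)^2" .
          have "r / (r + a)^2 + a / (r + a)^2 = (r + a) / (r + a)^2" by (simp add: add_divide_distrib)
          also have "\<dots> = 1 / (r + a)" using ra by (simp add: power2_eq_square)
          finally show ?thesis using s1 s2 by simp
        qed
        finally show ?thesis unfolding r_def .
      qed
      moreover have "\<forall>f. f p = 0 \<longrightarrow> f x = 1 \<longrightarrow> 1 / (r' y + a) \<le> energy V E L f"
      proof (intro allI impI)
        fix f :: "'a \<Rightarrow> real" assume f: "f p = 0" "f x = 1"
        define t where "t = f y"
        have "t^2 / r \<le> energy V' E' L f"
        proof (cases "t = 0")
          case True then show ?thesis using energy_nonneg[OF m', of f] by simp
        next
          case False
          have "1 / r \<le> energy V' E' L (\<lambda>v. (1 / t) * f v)"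
            using g' f False unfolding good_def t_def by simp
          also have "\<dots> = (1/t)^2 * energy V' E' L f" by (rule energy_scale)
          finally have "1 / r \<le> energy V' E' L f / t^2" by (simp add: power_divide)
          then show ?thesis using False r0 by (simp add: field_simps)
        qed
        then have "t^2 / r + (1 - t)^2 / a \<le> energy V E L f" unfolding eT t_def using f by simp
        then show "1 / (r' y + a) \<le> energy V E L f" using sq_ineq[OF r0 a0, of t] unfolding r_def by linarith
      qed
      ultimately show ?thesis unfolding good_def using r0 a0 r_def by auto
    qed
    have resV': "eff_resistance V E L p q = r' q" if "q \<in> V'" for q
    proof (cases "q = p")
      case True then show ?thesis unfolding r'_def eff_resistance_def by simp
    next
      case False then show ?thesis using good_res[OF A[OF that False]] by simp
    qed
    have resx: "eff_resistance V E L p x = r' y + a" using good_res[OF B] xp by simp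
    have part1: "\<forall>q\<in>V. q \<noteq> p \<longrightarrow> good V E L p q (eff_resistance V E L p q)"
    proof (intro ballI impI)
      fix q assume q: "q \<in> V" "q \<noteq> p"
      show "good V E L p q (eff_resistance V E L p q)"
      proof (cases "q = x")
        case True then show ?thesis using B resx by simp
      next
        case False
        then have "q \<in> V'" using q unfolding V'_def by simp
        then show ?thesis using A[OF _ q(2)] resV' by simp
      qed
    qed
    have fV': "finite V'" using fV unfolding V'_def by simp
    have VV: "V = insert x V'" using xV unfolding V'_def by auto
    have "(\<Sum>q\<in>V. (2 - real (valence E q)) * eff_resistance V E L p q)
        = (2 - real (valence E x)) * eff_resistance V E L p x +
          (\<Sum>q\<in>V'. (2 - real (valence E q)) * eff_resistance V E L p q)"
      unfolding VV using fV' xV' by simp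
    also have "(\<Sum>q\<in>V'. (2 - real (valence E q)) * eff_resistance V E L p q)
        = (\<Sum>q\<in>V'. (2 - real (valence E' q)) * r' q - (if q = y then r' q else 0))"
    proof (rule sum.cong)
      fix q assume q: "q \<in> V'"
      then have "q \<noteq> x" using xV' by blast
      then show "(2 - real (valence E q)) * eff_resistance V E L p q =
          (2 - real (valence E' q)) * r' q - (if q = y then r' q else 0)"
        using valence_remove[OF m xy] resV'[OF q] unfolding E'_def by (simp add: algebra_simps)
    qed simp
    also have "\<dots> = (\<Sum>q\<in>V'. (2 - real (valence E' q)) * r' q) - r' y"
      using fV' yV' by (simp add: sum_subtractf)
    finally have sumeq: "(\<Sum>q\<in>V. (2 - real (valence E q)) * eff_resistance V E L p q)
        = total_length E' L + a"
      using IH valence_leaf[OF m xy uq] resx unfolding r'_def by simp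
    have fE: "finite E" using finite_E[OF m] .
    have EE: "E = insert {x,y} E'" using e0 unfolding E'_def by auto
    have fE': "finite E'" using fE unfolding E'_def by simp
    have nE': "{x,y} \<notin> E'" unfolding E'_def by simp
    have tl: "total_length E L = total_length E' L + a"
      unfolding total_length_def EE a_def using fE' nE' by simp
    have cE: "card E = card E' + 1" unfolding EE using fE' nE' by simp
    have cV: "card V = card V' + 1" unfolding VV using fV' xV' by simp
    show ?thesis using part1 sumeq tl cE cV IH by simp
  qed
qed

theorem lemma4p1:
  fixes V :: "'a set" and E :: "'a set set" and L :: "'a set \<Rightarrow> real" and p :: 'a
  assumes "metrized_graph V E L" and "is_tree V E" and "p \<in> V"
  shows "total_length E L =
           (\<Sum>q\<in>V. (2 - real (valence E q)) * eff_resistance V E L p q) \<and>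
         ((\<forall>e\<in>E. L e = 1) \<longrightarrow>
           real (card V) - 1 = (\<Sum>q\<in>V. (2 - real (valence E q)) * eff_resistance V E L p q))"
proof -
  have M: "total_length E L = (\<Sum>q\<in>V. (2 - real (valence E q)) * eff_resistance V E L p q)"
    "card E + 1 = card V" using main[OF refl assms] by auto
  show ?thesis
  proof (intro conjI impI)
    show "total_length E L = (\<Sum>q\<in>V. (2 - real (valence E q)) * eff_resistance V E L p q)" by (rule M(1))
    assume "\<forall>e\<in>E. L e = 1"
    then have "total_length E L = real (card E)" unfolding total_length_def by simp
    then show "real (card V) - 1 = (\<Sum>q\<in>V. (2 - real (valence E q)) * eff_resistance V E L p q)"
      using M by (metis add_diff_cancel_right' of_nat_1 of_nat_add)
  qed
qed

end
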